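(* Let $\mathcal{A}=\{1,\dots,N\}$, $\boldsymbol{\lambda}\in\mathbb{R}_+^N$, $\boldsymbol{\delta}\in\mathbb{R}^N$ with $\delta_i>0$, $B\in\mathbb{R}_+^{N\times N}$ with zero diagonal whose associated directed graph is weakly connected but not strongly connected, $\mathcal{S}\subset\mathbb{R}_+^N$ convex, and $q_i:\mathbb{R}_+\to(0,1]$ decreasing, strictly convex, continuously differentiable. For $\epsilon>0$ and $\mathbf{s}\in\mathcal{S}$ let $\bar{\mathbf{p}}^\epsilon(\mathbf{s})>\mathbf{0}$ be the unique strictly positive solution of $(\mathbf{1}-\mathbf{p})\circ(\boldsymbol{\lambda}+\epsilon\mathbf{1}+B\mathbf{p})-\mathbf{q}(\mathbf{s})^{-1}\circ\boldsymbol{\delta}\circ\mathbf{p}=\mathbf{0}$. Then for each $\mathbf{s}\in\mathcal{S}$, $\bar{\mathbf{p}}^\epsilon(\mathbf{s})$ is increasing in $\epsilon>0$.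
   Context: $\circ$ is the element-wise product; $\mathbf{q}(\mathbf{s})=(q_i(s_i))_i$ and $\mathbf{q}(\mathbf{s})^{-1}$ is its element-wise inverse. The associated graph has an edge $(j,i)$ iff $b_{i,j}>0$. Vectors are ordered componentwise. *)

theory Defs
  imports "HOL-Analysis.Analysis"
begin

definition graph_edges :: "real^'n^'n \<Rightarrow> ('n \<times> 'n) set" where
  "graph_edges B = {(j, i). B $ i $ j > 0}"

definition strongly_connected_graph :: "real^'n^'n \<Rightarrow> bool" where
  "strongly_connected_graph B \<longleftrightarrow> (\<forall>i j. (i, j) \<in> (graph_edges B)\<^sup>*)"

definition weakly_connected_graph :: "real^'n^'n \<Rightarrow> bool" where
  "weakly_connected_graph B \<longleftrightarrow>
     (\<forall>i j. (i, j) \<in> (graph_edges B \<union> (graph_edges B)\<inverse>)\<^sup>*)"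

definition strictly_convex_on :: "real set \<Rightarrow> (real \<Rightarrow> real) \<Rightarrow> bool" where
  "strictly_convex_on A f \<longleftrightarrow>
     (\<forall>x\<in>A. \<forall>y\<in>A. \<forall>t::real. x \<noteq> y \<and> 0 < t \<and> t < 1 \<longrightarrow>
        f ((1 - t) * x + t * y) < (1 - t) * f x + t * f y)"

definition is_equilibrium ::
  "real^'n \<Rightarrow> real^'n \<Rightarrow> real^'n^'n \<Rightarrow> ('n \<Rightarrow> real \<Rightarrow> real) \<Rightarrow> real^'n \<Rightarrow> real \<Rightarrow> real^'n \<Rightarrow> bool"
  where
  "is_equilibrium lam del B q s eps p \<longleftrightarrow>
     (\<forall>i. (1 - p $ i) * (lam $ i + eps + (B *v p) $ i) - del $ i * p $ i / q i (s $ i) = 0)"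

definition pbar ::
  "real^'n \<Rightarrow> real^'n \<Rightarrow> real^'n^'n \<Rightarrow> ('n \<Rightarrow> real \<Rightarrow> real) \<Rightarrow> real^'n \<Rightarrow> real \<Rightarrow> real^'n"
  where
  "pbar lam del B q s eps =
     (THE p. (\<forall>i. p $ i > 0) \<and> is_equilibrium lam del B q s eps p)"

end

theory Submission
  imports Defs
begin

theorem proposition4:
  fixes lam del :: "real^'n"
    and B :: "real^'n^'n"
    and S :: "(real^'n) set"
    and q :: "'n \<Rightarrow> real \<Rightarrow> real"
  assumes lam_nonneg: "\<forall>i. lam $ i \<ge> 0"
    and del_pos: "\<forall>i. del $ i > 0"
    and B_nonneg: "\<forall>i j. B $ i $ j \<ge> 0"
    and B_diag: "\<forall>i. B $ i $ i = 0"
    and weak: "weakly_connected_graph B"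
    and not_strong: "\<not> strongly_connected_graph B"
    and S_nonneg: "\<forall>s\<in>S. \<forall>i. s $ i \<ge> 0"
    and S_convex: "convex S"
    and q_range: "\<forall>i. \<forall>x\<ge>0. 0 < q i x \<and> q i x \<le> 1"
    and q_decr: "\<forall>i. \<forall>x y. 0 \<le> x \<and> x \<le> y \<longrightarrow> q i y \<le> q i x"
    and q_strict_convex: "\<forall>i. strictly_convex_on {0..} (q i)"
    and q_C1: "\<forall>i. \<exists>q'. (\<forall>x\<ge>0. (q i has_real_derivative q' x) (at x within {0..}))
                          \<and> continuous_on {0..} q'"
    and unique_sol: "\<forall>eps>0. \<forall>s\<in>S. \<exists>!p. (\<forall>i. p $ i > 0) \<and> is_equilibrium lam del B q s eps p"
    and s_in: "s \<in> S"
    and eps: "0 < eps1" "eps1 \<le> eps2"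
  shows "\<forall>i. pbar lam del B q s eps1 $ i \<le> pbar lam del B q s eps2 $ i"
proof (rule ccontr)
  define P where "P e = pbar lam del B q s e" for e
  have sol: "(\<forall>i. P e $ i > 0) \<and> is_equilibrium lam del B q s e (P e)" if "e > 0" for e
  proof -
    have "\<exists>!p. (\<forall>i. p $ i > 0) \<and> is_equilibrium lam del B q s e p" using unique_sol that s_in by blast
    from theI'[OF this] show ?thesis unfolding P_def pbar_def .
  qed
  define p1 where "p1 = P eps1"
  define p2 where "p2 = P eps2"
  have p1pos: "\<forall>i. p1 $ i > 0" and eq1: "is_equilibrium lam del B q s eps1 p1"
    using sol[of eps1] eps unfolding p1_def by auto
  have p2pos: "\<forall>i. p2 $ i > 0" and eq2: "is_equilibrium lam del B q s eps2 p2"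
    using sol[of eps2] eps unfolding p2_def by auto
  assume "\<not> (\<forall>i. pbar lam del B q s eps1 $ i \<le> pbar lam del B q s eps2 $ i)"
  then obtain i0 where i0: "p2 $ i0 < p1 $ i0" by (auto simp: p1_def p2_def P_def not_le)
  define r where "r j = p2 $ j / p1 $ j" for j
  obtain k where k: "\<forall>j. r k \<le> r j"
  proof -
    have "Min (range r) \<in> range r" by (rule Min_in) auto
    then obtain k where "r k = Min (range r)" by (metis imageE)
    then have "\<forall>j. r k \<le> r j" by auto
    then show ?thesis using that by blast
  qed
  define t where "t = r k"
  have t1: "t < 1"
  proof -
    have "r i0 < 1" unfolding r_def using i0 p1pos by (simp add: divide_less_eq)
    then show ?thesis using k unfolding t_def by (meson le_less_trans)
  qed
  have t0: "t > 0" unfolding t_def r_def using p1pos p2pos by auto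
  have ge: "p2 $ j \<ge> t * p1 $ j" for j
  proof -
    have "t \<le> p2 $ j / p1 $ j" using k unfolding t_def r_def by auto
    then show ?thesis using p1pos by (simp add: pos_le_divide_eq)
  qed
  have p2k: "p2 $ k = t * p1 $ k" unfolding t_def r_def using p1pos
    by (metis less_irrefl nonzero_eq_divide_eq mult.commute)
  have Bge: "(B *v p2) $ k \<ge> t * (B *v p1) $ k"
  proof -
    have "t * (B *v p1) $ k = (\<Sum>j\<in>UNIV. B $ k $ j * (t * p1 $ j))"
      by (simp add: matrix_vector_mult_def sum_distrib_left algebra_simps)
    also have "\<dots> \<le> (\<Sum>j\<in>UNIV. B $ k $ j * p2 $ j)"
      by (rule sum_mono) (simp add: B_nonneg ge mult_left_mono)
    finally show ?thesis by (simp add: matrix_vector_mult_def)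
  qed
  have Bp1: "(B *v p1) $ k \<ge> 0"
    by (simp add: matrix_vector_mult_def B_nonneg p1pos less_imp_le sum_nonneg)
  define c where "c = del $ k / q k (s $ k)"
  have c0: "c > 0" unfolding c_def using del_pos q_range S_nonneg s_in by auto
  define y1 where "y1 = lam $ k + eps1 + (B *v p1) $ k"
  define y2 where "y2 = lam $ k + eps2 + (B *v p2) $ k"
  have y1: "y1 > 0" unfolding y1_def using lam_nonneg[rule_format, of k] eps Bp1 by (smt (verit))
  have y2: "y2 > t * y1"
  proof -
    have "t * y1 = t * (lam $ k + eps1) + t * (B *v p1) $ k" unfolding y1_def by (simp add: algebra_simps)
    moreover have "t * (lam $ k + eps1) < lam $ k + eps2"
    proof -
      have "t * (lam $ k + eps1) < lam $ k + eps1" using t1 eps lam_nonneg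
        by (simp add: add_nonneg_pos)
      then show ?thesis using eps by linarith
    qed
    ultimately show ?thesis unfolding y2_def using Bge by linarith
  qed
  have e1: "(1 - p1 $ k) * y1 = c * p1 $ k"
  proof -
    have "(1 - p1 $ k) * y1 - del $ k * p1 $ k / q k (s $ k) = 0"
      using eq1 unfolding is_equilibrium_def y1_def by blast
    moreover have "c * p1 $ k = del $ k * p1 $ k / q k (s $ k)" unfolding c_def by simp
    ultimately show ?thesis by linarith
  qed
  have e2: "(1 - p2 $ k) * y2 = c * p2 $ k"
  proof -
    have "(1 - p2 $ k) * y2 - del $ k * p2 $ k / q k (s $ k) = 0"
      using eq2 unfolding is_equilibrium_def y2_def by blast
    moreover have "c * p2 $ k = del $ k * p2 $ k / q k (s $ k)" unfolding c_def by simp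
    ultimately show ?thesis by linarith
  qed
  have a1: "y1 = p1 $ k * (y1 + c)" using e1 by (simp add: algebra_simps)
  have a2: "y2 = t * p1 $ k * (y2 + c)" using e2 p2k by (simp add: algebra_simps)
  have "y2 * (y1 + c) = t * y1 * (y2 + c)"
  proof -
    have "y2 * (y1 + c) = t * p1 $ k * (y2 + c) * (y1 + c)" using a2 by simp
    also have "\<dots> = t * (p1 $ k * (y1 + c)) * (y2 + c)" by (simp add: algebra_simps)
    also have "\<dots> = t * y1 * (y2 + c)" using a1 by simp
    finally show ?thesis .
  qed
  moreover have "t * y1 * y2 \<le> y2 * y1" using t1 y1 y2 t0
  proof -
    have "t * (y1 * y2) \<le> 1 * (y1 * y2)" using t1 y1 y2 t0
    proof (intro mult_right_mono)
      have "y2 > 0" using y2 t0 y1 by (smt (verit) mult_pos_pos)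
      then show "0 \<le> y1 * y2" using y1 by simp
    qed (use t1 in auto)
    then show ?thesis by (simp add: algebra_simps)
  qed
  moreover have "t * y1 * c < y2 * c" using y2 c0 by simp
  ultimately show False by (simp add: algebra_simps)
qed

end
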